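(* If $d$ is an odd positive integer, then for every $x\ge0$, $$\Pi_{\le d}\,\mathrm{sign}(x)=\sqrt{\frac{2d}{\pi}}\,H_{d-1}(0)\int_0^x\frac{H_d(t)}{t}\,dt.$$
   Context: The Hermite polynomials $(H_k)_{k\ge0}$ are the orthonormal polynomials for $\mathcal{N}(0,1)$ with $\deg H_k=k$ and positive leading coefficient (the probabilist's Hermite polynomials divided by $\sqrt{k!}$). $\Pi_{\le d}g=\sum_{k=0}^d\langle g,H_k\rangle H_k$ where $\langle g,h\rangle=\mathbb{E}_{x\sim\mathcal{N}(0,1)}[g(x)h(x)]$, and $\mathrm{sign}:\mathbb{R}\to\{\pm1\}$ is the sign function. *)

theory Defs
  imports "HOL-Probability.Probability"
begin

fun hermite_prob :: "nat \<Rightarrow> real \<Rightarrow> real" where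
  "hermite_prob 0 x = 1"
| "hermite_prob (Suc 0) x = x"
| "hermite_prob (Suc (Suc n)) x = x * hermite_prob (Suc n) x - real (Suc n) * hermite_prob n x"

text \<open>Normalized Hermite polynomials H_k = He_k / sqrt(k!), orthonormal for N(0,1).\<close>
definition hermite :: "nat \<Rightarrow> real \<Rightarrow> real" where
  "hermite k x = hermite_prob k x / sqrt (fact k)"

definition gauss_inner :: "(real \<Rightarrow> real) \<Rightarrow> (real \<Rightarrow> real) \<Rightarrow> real" where
  "gauss_inner g h = (\<integral>x. g x * h x * std_normal_density x \<partial>lborel)"

definition hermite_proj :: "nat \<Rightarrow> (real \<Rightarrow> real) \<Rightarrow> real \<Rightarrow> real" where
  "hermite_proj d g x = (\<Sum>k\<le>d. gauss_inner g (hermite k) * hermite k x)"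

text \<open>sign : R -> {1,-1}; the value at 0 is irrelevant (null set), we take sign 0 = 1.\<close>
definition sign_pm :: "real \<Rightarrow> real" where
  "sign_pm x = (if x \<ge> 0 then 1 else -1)"

end

theory Submission
  imports Defs
begin

abbreviation He where "He \<equiv> hermite_prob"

lemma He_SS: "He (Suc (Suc n)) x = x * He (Suc n) x - real (Suc n) * He n x" by simp

lemma He_deriv: "(He (Suc n) has_real_derivative (real (Suc n) * He n x)) (at x)"
proof -
  have "\<forall>x. (He (Suc n) has_real_derivative (real (Suc n) * He n x)) (at x) \<and>
            (He (Suc (Suc n)) has_real_derivative (real (Suc (Suc n)) * He (Suc n) x)) (at x)"
  proof (induction n)
    case 0
    show ?case
    proof
      fix x
      have a: "He (Suc 0) = (\<lambda>x. x)" by (rule ext) simp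
      have b: "He 2 = (\<lambda>x. x * x - 1)" by (rule ext) (simp add: numeral_2_eq_2)
      show "(He (Suc 0) has_real_derivative (real (Suc 0) * He 0 x)) (at x) \<and>
            (He (Suc (Suc 0)) has_real_derivative (real (Suc (Suc 0)) * He (Suc 0) x)) (at x)"
        unfolding a b[unfolded numeral_2_eq_2]
        by (auto intro!: derivative_eq_intros)
    qed
  next
    case (Suc n)
    show ?case
    proof
      fix x
      have e: "He (Suc (Suc (Suc n))) = (\<lambda>x. x * He (Suc (Suc n)) x - real (Suc (Suc n)) * He (Suc n) x)"
        by (rule ext) simp
      have d1: "(He (Suc (Suc n)) has_real_derivative (real (Suc (Suc n)) * He (Suc n) x)) (at x)"
        and d0: "(He (Suc n) has_real_derivative (real (Suc n) * He n x)) (at x)"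
        using Suc.IH[rule_format, of x] by auto
      have "(He (Suc (Suc (Suc n))) has_real_derivative
         (1 * He (Suc (Suc n)) x + real (Suc (Suc n)) * He (Suc n) x * x - real (Suc (Suc n)) * (real (Suc n) * He n x))) (at x)"
        unfolding e
        by (intro DERIV_diff DERIV_mult DERIV_cmult d1 d0 DERIV_ident)
      moreover have "1 * He (Suc (Suc n)) x + real (Suc (Suc n)) * He (Suc n) x * x - real (Suc (Suc n)) * (real (Suc n) * He n x)
          = real (Suc (Suc (Suc n))) * He (Suc (Suc n)) x"
        by (simp add: algebra_simps)
      ultimately show "(He (Suc (Suc n)) has_real_derivative (real (Suc (Suc n)) * He (Suc n) x)) (at x) \<and>
            (He (Suc (Suc (Suc n))) has_real_derivative (real (Suc (Suc (Suc n))) * He (Suc (Suc n)) x)) (at x)"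
        using Suc.IH[rule_format, of x] by simp
    qed
  qed
  then show ?thesis by blast
qed

lemma He_deriv_gen: "(He n has_real_derivative (if n = 0 then 0 else real n * He (n - 1) x)) (at x)"
proof (cases n)
  case 0
  have "He 0 = (\<lambda>x. 1)" by (rule ext) simp
  then show ?thesis using 0 by simp
next
  case (Suc m) then show ?thesis using He_deriv[of m x] by simp
qed

lemma He_cont: "isCont (He n) x"
  using He_deriv_gen[of n x] DERIV_isCont by blast

lemma He_odd0: "He (2 * m + 1) 0 = 0"
proof (induction m)
  case 0 then show ?case by simp
next
  case (Suc m)
  have "2 * Suc m + 1 = Suc (Suc (2 * m + 1))" by simp
  then show ?case using Suc by simp
qed

lemma He_prod0: "He j 0 * He (Suc j) 0 = 0"
proof (cases "even j")
  case True
  then obtain m where "Suc j = 2 * m + 1" by (metis Suc_eq_plus1 evenE)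
  then show ?thesis using He_odd0[of m] by simp
next
  case False
  then obtain m where "j = 2 * m + 1" by (metis oddE)
  then show ?thesis using He_odd0[of m] by simp
qed

lemma He_bound_aux: "\<bar>x\<bar> \<ge> 1 \<Longrightarrow> \<bar>He n x\<bar> \<le> fact (Suc n) * \<bar>x\<bar> ^ n \<and> \<bar>He (Suc n) x\<bar> \<le> fact (Suc (Suc n)) * \<bar>x\<bar> ^ Suc n"
proof (induction n)
  case 0 then show ?case by simp
next
  case (Suc n)
  have IH1: "\<bar>He (Suc n) x\<bar> \<le> fact (Suc (Suc n)) * \<bar>x\<bar> ^ Suc n" using Suc by simp
  have IH0: "\<bar>He n x\<bar> \<le> fact (Suc n) * \<bar>x\<bar> ^ n" using Suc by simp
  have p: "\<bar>x\<bar> ^ n \<le> \<bar>x\<bar> ^ Suc (Suc n)" using Suc.prems by (intro power_increasing) auto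
  have "\<bar>He (Suc (Suc n)) x\<bar> \<le> \<bar>x\<bar> * \<bar>He (Suc n) x\<bar> + real (Suc n) * \<bar>He n x\<bar>"
    by (simp only: He_SS) (metis abs_mult abs_of_nat abs_triangle_ineq4)
  also have "\<dots> \<le> \<bar>x\<bar> * (fact (Suc (Suc n)) * \<bar>x\<bar> ^ Suc n) + real (Suc n) * (fact (Suc n) * \<bar>x\<bar> ^ n)"
    by (intro add_mono mult_left_mono IH1 IH0) auto
  also have "\<dots> \<le> fact (Suc (Suc n)) * \<bar>x\<bar> ^ Suc (Suc n) + real (Suc n) * (fact (Suc n) * \<bar>x\<bar> ^ Suc (Suc n))"
    by (intro add_mono mult_left_mono p) (auto simp: algebra_simps)
  also have "\<dots> \<le> fact (Suc (Suc (Suc n))) * \<bar>x\<bar> ^ Suc (Suc n)"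
  proof -
    have "fact (Suc (Suc n)) + real (Suc n) * fact (Suc n) \<le> (fact (Suc (Suc (Suc n))) :: real)"
      by (simp add: algebra_simps)
    then show ?thesis by (metis distrib_right mult.assoc mult_right_mono zero_le_power abs_ge_zero)
  qed
  finally show ?case using IH1 by simp
qed

lemma He_bound: "\<bar>x\<bar> \<ge> 1 \<Longrightarrow> \<bar>He n x\<bar> \<le> fact (Suc n) * \<bar>x\<bar> ^ n"
  using He_bound_aux by blast

lemma CD: "x * (\<Sum>j\<le>n. He j 0 * He j x / fact j) = (He (Suc n) x * He n 0 - He n x * He (Suc n) 0) / fact n"
proof (induction n)
  case 0 then show ?case by simp
next
  case (Suc n)
  have "x * (\<Sum>j\<le>Suc n. He j 0 * He j x / fact j) =
     x * He (Suc n) 0 * He (Suc n) x / fact (Suc n) + (He (Suc n) x * He n 0 - He n x * He (Suc n) 0) / fact n"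
    using Suc by (simp add: algebra_simps)
  also have "\<dots> = (He (Suc (Suc n)) x * He (Suc n) 0 - He (Suc n) x * He (Suc (Suc n)) 0) / fact (Suc n)"
  proof -
    have f: "fact (Suc n) = real (Suc n) * (fact n :: real)" by simp
    have fn: "(fact n :: real) \<noteq> 0" by simp
    have s1: "He (Suc (Suc n)) x = x * He (Suc n) x - real (Suc n) * He n x" by simp
    have s0: "He (Suc (Suc n)) 0 = - real (Suc n) * He n 0" by (simp add: algebra_simps)
    have key: "\<And>a b A B N F. F \<noteq> 0 \<Longrightarrow> N > 0 \<Longrightarrow>
       x * b * B / (N * F) + (B * a - A * b) / F = ((x * B - N * A) * b - B * (- N * a)) / (N * F)"
      by (simp add: field_simps)
    show ?thesis unfolding f s1 s0 by (rule key) (simp_all add: fn)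
  qed
  finally show ?case .
qed

lemma He_integrable_aux:
  "(\<forall>j. integrable lborel (\<lambda>x. std_normal_density x * x ^ j * He n x)) \<and>
   (\<forall>j. integrable lborel (\<lambda>x. std_normal_density x * x ^ j * He (Suc n) x))"
proof (induction n)
  case 0
  show ?case
    using integrable_std_normal_moment
    by (auto simp del: power_Suc simp add: power_Suc2[symmetric] mult.assoc)
next
  case (Suc n)
  have e: "(\<lambda>x. std_normal_density x * x ^ j * He (Suc (Suc n)) x) =
     (\<lambda>x. std_normal_density x * x ^ Suc j * He (Suc n) x - real (Suc n) * (std_normal_density x * x ^ j * He n x))" for j
    by (rule ext) (simp add: algebra_simps)
  show ?case
  proof (intro conjI allI)
    fix j
    show "integrable lborel (\<lambda>x. std_normal_density x * x ^ j * He (Suc n) x)" using Suc by blast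
    have i1: "integrable lborel (\<lambda>x. std_normal_density x * x ^ Suc j * He (Suc n) x)"
      and i0: "integrable lborel (\<lambda>x. std_normal_density x * x ^ j * He n x)" using Suc by blast+
    show "integrable lborel (\<lambda>x. std_normal_density x * x ^ j * He (Suc (Suc n)) x)"
      unfolding e by (intro Bochner_Integration.integrable_diff Bochner_Integration.integrable_mult_right i1 i0)
  qed
qed

lemma He_integrable: "integrable lborel (\<lambda>x. He n x * std_normal_density x)"
  using He_integrable_aux[of n] by (auto dest: spec[of _ 0] simp: mult.commute)


lemma He_lim:
  assumes c: "\<bar>c\<bar> = 1"
  shows "((\<lambda>x. He n (c * x) * std_normal_density x) \<longlongrightarrow> 0) at_top"
proof (rule Lim_null_comparison)
  let ?g = "\<lambda>x. fact (Suc n) / sqrt (2 * pi) * exp (1/2) * (x ^ n / exp x)"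
  show "(?g \<longlongrightarrow> 0) at_top"
    using tendsto_mult_left[OF tendsto_power_div_exp_0[of n], of "fact (Suc n) / sqrt (2 * pi) * exp (1/2)"]
    by simp
  show "\<forall>\<^sub>F x in at_top. norm (He n (c * x) * std_normal_density x) \<le> ?g x"
    using eventually_ge_at_top[of 1]
  proof eventually_elim
    case (elim x)
    have cx: "\<bar>c * x\<bar> = x" using c elim by (simp add: abs_mult)
    have b: "\<bar>He n (c * x)\<bar> \<le> fact (Suc n) * x ^ n" using He_bound[of "c * x" n] cx elim by simp
    have ex: "exp (- x\<^sup>2 / 2) \<le> exp (1/2) / exp x"
    proof -
      have "- x\<^sup>2 / 2 \<le> 1/2 - x" 
      proof -
        have "0 \<le> (x - 1)\<^sup>2" by simp
        then have "0 \<le> x\<^sup>2 + 1 - 2 * x" by (simp add: power2_diff)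
        then show ?thesis by linarith
      qed
      then have "exp (- x\<^sup>2 / 2) \<le> exp (1/2 - x)" by simp
      then show ?thesis by (simp add: exp_diff)
    qed
    have "norm (He n (c * x) * std_normal_density x) = \<bar>He n (c * x)\<bar> * (exp (- x\<^sup>2 / 2) / sqrt (2 * pi))"
      by (simp add: std_normal_density_def abs_mult)
    also have "\<dots> \<le> (fact (Suc n) * x ^ n) * ((exp (1/2) / exp x) / sqrt (2 * pi))"
      using elim by (intro mult_mono b divide_right_mono ex) auto
    also have "\<dots> = ?g x" by (simp add: field_simps)
    finally show ?case .
  qed
qed


lemma halfline:
  fixes F f :: "real \<Rightarrow> real"
  assumes D: "\<And>x. (F has_real_derivative f x) (at x)"
    and C: "\<And>x. isCont f x"
    and I: "integrable lborel f"
    and L: "(F \<longlongrightarrow> L) at_top"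
  shows "(\<integral>x. indicator {0..} x * f x \<partial>lborel) = L - F 0"
proof -
  have Ih: "integrable lborel (\<lambda>x. indicator {0..} x * f x)"
    using integrable_real_mult_indicator[OF _ I, of "{0..}"] by (simp add: mult.commute)
  have T: "((\<lambda>y. \<integral>x. indicator {..y} x *\<^sub>R (indicator {0..} x * f x) \<partial>lborel) \<longlongrightarrow>
      (\<integral>x. indicator {0..} x * f x \<partial>lborel)) at_top"
    by (rule tendsto_integral_at_top) (auto intro: Ih)
  have "\<forall>\<^sub>F y in at_top. F y - F 0 = (\<integral>x. indicator {..y} x *\<^sub>R (indicator {0..} x * f x) \<partial>lborel)"
    using eventually_ge_at_top[of 0]
  proof eventually_elim
    case (elim y)
    have "(\<integral>x. indicator {..y} x *\<^sub>R (indicator {0..} x * f x) \<partial>lborel) = (\<integral>x. indicator {0..y} x *\<^sub>R f x \<partial>lborel)"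
      by (intro Bochner_Integration.integral_cong) (auto split: split_indicator)
    also have "\<dots> = F y - F 0"
      using elim
      by (intro integral_FTC_atLeastAtMost)
         (auto intro!: continuous_at_imp_continuous_on C has_field_derivative_imp_has_derivative
               simp: has_real_derivative_iff_has_vector_derivative[symmetric]
               intro: has_field_derivative_at_within D)
    finally show ?case by simp
  qed
  note ev = this
  have "((\<lambda>y. F y - F 0) \<longlongrightarrow> (\<integral>x. indicator {0..} x * f x \<partial>lborel)) at_top"
    by (rule Lim_transform_eventually[OF T]) (rule eventually_mono[OF ev], simp)
  moreover have "((\<lambda>y. F y - F 0) \<longlongrightarrow> L - F 0) at_top" using L by (intro tendsto_intros)
  ultimately show ?thesis using tendsto_unique by (metis trivial_limit_at_top_linorder)
qed


lemma reflect:
  fixes g :: "real \<Rightarrow> real"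
  assumes I: "integrable lborel g"
  shows "(\<integral>x. indicator {..<0} x * g x \<partial>lborel) = (\<integral>x. indicator {0..} x * g (- x) \<partial>lborel)"
proof -
  have gm[measurable]: "g \<in> borel_measurable borel" using borel_measurable_integrable[OF I] by simp
  have "(\<integral>x. indicator {..<0} x * g x \<partial>lborel) = \<bar>-1\<bar> *\<^sub>R (\<integral>x. indicator {..<0} (0 + -1 * x) * g (0 + -1 * x) \<partial>lborel)"
    by (rule lborel_integral_real_affine) simp
  also have "\<dots> = (\<integral>x. indicator {0<..} x * g (- x) \<partial>lborel)"
    by (simp add: indicator_def)
  also have "\<dots> = (\<integral>x. indicator {0..} x * g (- x) \<partial>lborel)"
    by (intro integral_cong_AE eventually_mono[OF AE_lborel_singleton[of 0]]) (auto simp: indicator_def)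
  finally show ?thesis .
qed

lemma He_cont': "isCont g x \<Longrightarrow> isCont (\<lambda>x. He n (g x)) x"
  using isCont_o2[OF _ He_cont] by blast

lemma He_recur_deriv: "He (Suc m) x = x * He m x - (if m = 0 then 0 else real m * He (m - 1) x)"
  by (cases m) auto

lemma snd_deriv: "(std_normal_density has_real_derivative (- x * std_normal_density x)) (at x)"
proof -
  have e: "std_normal_density = (\<lambda>x. 1 / sqrt (2 * pi) * exp (- x\<^sup>2 / 2))"
    by (rule ext) (simp add: std_normal_density_def)
  have s: "sqrt (pi * 2) * sqrt (pi * 2) = pi * 2" by simp
  show ?thesis unfolding e by (auto intro!: derivative_eq_intros simp: algebra_simps) (simp add: field_simps s)
qed

lemma snd_cont: "isCont std_normal_density x"
  using DERIV_isCont[OF snd_deriv] .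

lemma snd_0: "std_normal_density 0 = 1 / sqrt (2 * pi)"
  by (simp add: std_normal_density_def)

lemma snd_neg: "std_normal_density (- x) = std_normal_density x"
  by (simp add: std_normal_density_def)

lemma inner_pos: "(\<integral>x. indicator {0..} x * (He (Suc m) x * std_normal_density x) \<partial>lborel) = He m 0 / sqrt (2 * pi)"
proof -
  let ?D = "\<lambda>x. if m = 0 then 0 else real m * He (m - 1) x"
  have "(\<integral>x. indicator {0..} x * (He (Suc m) x * std_normal_density x) \<partial>lborel) = 0 - (- He m 0 * std_normal_density 0)"
  proof (rule halfline[where F="\<lambda>x. - He m x * std_normal_density x" and L=0])
    fix x
    have "((\<lambda>x. - He m x * std_normal_density x) has_real_derivative
        (- ?D x * std_normal_density x + (- x * std_normal_density x) * (- He m x))) (at x)"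
      by (intro DERIV_mult DERIV_minus He_deriv_gen snd_deriv)
    moreover have "- ?D x * std_normal_density x + (- x * std_normal_density x) * (- He m x) = He (Suc m) x * std_normal_density x"
      by (simp only: He_recur_deriv) (simp add: algebra_simps)
    ultimately show "((\<lambda>x. - He m x * std_normal_density x) has_real_derivative He (Suc m) x * std_normal_density x) (at x)"
      by simp
    show "isCont (\<lambda>x. He (Suc m) x * std_normal_density x) x"
      by (intro continuous_intros He_cont snd_cont)
  next
    show "integrable lborel (\<lambda>x. He (Suc m) x * std_normal_density x)" by (rule He_integrable)
    show "((\<lambda>x. - He m x * std_normal_density x) \<longlongrightarrow> 0) at_top"
      using tendsto_minus[OF He_lim[of 1 m]] by simp
  qed
  then show ?thesis by (simp add: snd_0)
qed

lemma inner_neg: "(\<integral>x. indicator {0..} x * (He (Suc m) (- x) * std_normal_density x) \<partial>lborel) = - He m 0 / sqrt (2 * pi)"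
proof -
  let ?D = "\<lambda>x. if m = 0 then 0 else real m * He (m - 1) x"
  have "(\<integral>x. indicator {0..} x * (He (Suc m) (- x) * std_normal_density x) \<partial>lborel) = 0 - (He m (- 0) * std_normal_density 0)"
  proof (rule halfline[where F="\<lambda>x. He m (- x) * std_normal_density x" and L=0])
    fix x
    have d: "((\<lambda>x. He m (- x)) has_real_derivative (?D (- x) * (- 1))) (at x)"
      using DERIV_chain2[OF He_deriv_gen[of m "- x"] DERIV_minus[OF DERIV_ident]] by simp
    have "((\<lambda>x. He m (- x) * std_normal_density x) has_real_derivative
        (?D (- x) * (- 1) * std_normal_density x + (- x * std_normal_density x) * He m (- x))) (at x)"
      by (intro DERIV_mult d snd_deriv)
    moreover have "?D (- x) * (- 1) * std_normal_density x + (- x * std_normal_density x) * He m (- x) = He (Suc m) (- x) * std_normal_density x"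
      by (simp only: He_recur_deriv) (simp add: algebra_simps)
    ultimately show "((\<lambda>x. He m (- x) * std_normal_density x) has_real_derivative He (Suc m) (- x) * std_normal_density x) (at x)"
      by simp
    show "isCont (\<lambda>x. He (Suc m) (- x) * std_normal_density x) x"
      by (intro continuous_intros He_cont' snd_cont)
  next
    have "integrable lborel (\<lambda>x. He (Suc m) (0 + -1 * x) * std_normal_density (0 + -1 * x))"
      by (rule lborel_integrable_real_affine[OF He_integrable]) simp
    then show "integrable lborel (\<lambda>x. He (Suc m) (- x) * std_normal_density x)" by (simp add: snd_neg)
    show "((\<lambda>x. He m (- x) * std_normal_density x) \<longlongrightarrow> 0) at_top"
      using He_lim[of "-1" m] by simp
  qed
  then show ?thesis by (simp add: snd_0)
qed


lemma gi_general:
  "gauss_inner sign_pm (hermite k) =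
    ((\<integral>x. indicator {0..} x * (He k x * std_normal_density x) \<partial>lborel) -
     (\<integral>x. indicator {0..} x * (He k (- x) * std_normal_density x) \<partial>lborel)) / sqrt (fact k)"
proof -
  let ?g = "\<lambda>x. He k x * std_normal_density x"
  have I: "integrable lborel ?g" by (rule He_integrable)
  have I1: "integrable lborel (\<lambda>x. indicator {0..} x * ?g x)"
    using integrable_real_mult_indicator[OF _ I, of "{0..}"] by (simp add: mult.commute)
  have I2: "integrable lborel (\<lambda>x. indicator {..<0} x * ?g x)"
    using integrable_real_mult_indicator[OF _ I, of "{..<0}"] by (simp add: mult.commute)
  have "gauss_inner sign_pm (hermite k) = (\<integral>x. (indicator {0..} x * ?g x - indicator {..<0} x * ?g x) / sqrt (fact k) \<partial>lborel)"
    unfolding gauss_inner_def hermite_def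
    by (intro Bochner_Integration.integral_cong) (auto simp: sign_pm_def indicator_def)
  also have "\<dots> = ((\<integral>x. indicator {0..} x * ?g x \<partial>lborel) - (\<integral>x. indicator {..<0} x * ?g x \<partial>lborel)) / sqrt (fact k)"
    using I1 I2 by simp
  also have "(\<integral>x. indicator {..<0} x * ?g x \<partial>lborel) = (\<integral>x. indicator {0..} x * ?g (- x) \<partial>lborel)"
    by (rule reflect[OF I])
  finally show ?thesis by (simp add: snd_neg)
qed

lemma gi_Suc: "gauss_inner sign_pm (hermite (Suc m)) = 2 * He m 0 / (sqrt (2 * pi) * sqrt (fact (Suc m)))"
  unfolding gi_general inner_pos inner_neg by simp

lemma gi_0: "gauss_inner sign_pm (hermite 0) = 0"
  unfolding gi_general by simp

lemma proj_formula:
  "hermite_proj (Suc n) sign_pm x = (\<Sum>j\<le>n. 2 / sqrt (2 * pi) * (He j 0 * He (Suc j) x / fact (Suc j)))"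
proof -
  have "hermite_proj (Suc n) sign_pm x = gauss_inner sign_pm (hermite 0) * hermite 0 x +
      (\<Sum>j\<le>n. gauss_inner sign_pm (hermite (Suc j)) * hermite (Suc j) x)"
    unfolding hermite_proj_def by (rule sum.atMost_Suc_shift)
  also have "\<dots> = (\<Sum>j\<le>n. 2 / sqrt (2 * pi) * (He j 0 * He (Suc j) x / fact (Suc j)))"
  proof -
    have "gauss_inner sign_pm (hermite (Suc j)) * hermite (Suc j) x = 2 / sqrt (2 * pi) * (He j 0 * He (Suc j) x / fact (Suc j))" for j
    proof -
      have s: "sqrt (fact (Suc j)) * sqrt (fact (Suc j)) = (fact (Suc j) :: real)"
        using fact_ge_zero real_sqrt_mult_self by (metis abs_of_nonneg real_sqrt_abs2 real_sqrt_mult)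
      show ?thesis unfolding gi_Suc hermite_def using s by (simp add: field_simps del: fact_Suc)
    qed
    then show ?thesis by (simp add: gi_0)
  qed
  finally show ?thesis .
qed


lemma integral_part:
  assumes "even n" and x: "x \<ge> 0"
  shows "integral {0..x} (\<lambda>t. He n 0 * (hermite (Suc n) t / t)) =
     fact n / sqrt (fact (Suc n)) * (\<Sum>j\<le>n. He j 0 * He (Suc j) x / fact (Suc j))"
proof -
  let ?S = "\<lambda>t. \<Sum>j\<le>n. He j 0 * He j t / fact j"
  let ?G = "\<lambda>t. \<Sum>j\<le>n. He j 0 / fact j * (He (Suc j) t / real (Suc j))"
  have dG: "(?G has_real_derivative ?S t) (at t)" for t
  proof -
    have hd: "((\<lambda>x. He (Suc j) x / real (Suc j)) has_real_derivative (real (Suc j) * He j t / real (Suc j))) (at t)" for j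
      by (intro DERIV_cdivide He_deriv)
    have "(?G has_real_derivative (\<Sum>j\<le>n. He j 0 / fact j * (real (Suc j) * He j t / real (Suc j)))) (at t)"
      by (intro DERIV_sum DERIV_cmult hd)
    then show ?thesis by simp
  qed
  have FTC: "(?S has_integral (?G x - ?G 0)) {0..x}"
  proof (rule fundamental_theorem_of_calculus)
    show "0 \<le> x" by (rule x)
    fix t show "(?G has_vector_derivative ?S t) (at t within {0..x})"
      unfolding has_real_derivative_iff_has_vector_derivative[symmetric]
      by (rule has_field_derivative_at_within[OF dG])
  qed
  have "He (Suc n) 0 = 0" using assms(1) He_odd0 by (metis Suc_eq_plus1 evenE)
  then have pt: "He n 0 * (hermite (Suc n) t / t) = fact n / sqrt (fact (Suc n)) * ?S t" if "t \<noteq> 0" for t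
  proof -
    have c: "t * (fact n * ?S t) = He n 0 * He (Suc n) t"
      using CD[of t n] \<open>He (Suc n) 0 = 0\<close> by (simp add: field_simps del: fact_Suc)
    have sp: "sqrt (fact (Suc n)) \<noteq> (0::real)" by simp
    have "He n 0 * (hermite (Suc n) t / t) = (He n 0 * He (Suc n) t) / (t * sqrt (fact (Suc n)))"
      unfolding hermite_def by simp
    also have "\<dots> = (t * (fact n * ?S t)) / (t * sqrt (fact (Suc n)))" by (simp only: c)
    also have "\<dots> = fact n / sqrt (fact (Suc n)) * ?S t" using that sp by (simp del: fact_Suc)
    finally show ?thesis .
  qed
  have "((\<lambda>t. He n 0 * (hermite (Suc n) t / t)) has_integral (fact n / sqrt (fact (Suc n)) * (?G x - ?G 0))) {0..x}"
    by (rule has_integral_spike[where S="{0}", OF negligible_sing _ has_integral_mult_right[OF FTC]]) (use pt in blast)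
  then have "integral {0..x} (\<lambda>t. He n 0 * (hermite (Suc n) t / t)) = fact n / sqrt (fact (Suc n)) * (?G x - ?G 0)"
    by (rule integral_unique)
  also have "?G x - ?G 0 = (\<Sum>j\<le>n. He j 0 * He (Suc j) x / fact (Suc j))"
    unfolding sum_subtractf[symmetric]
  proof (rule sum.cong[OF refl])
    fix j
    have z: "He j 0 * He (Suc j) 0 = 0" by (rule He_prod0)
    show "He j 0 / fact j * (He (Suc j) x / real (Suc j)) - He j 0 / fact j * (He (Suc j) 0 / real (Suc j)) =
        He j 0 * He (Suc j) x / fact (Suc j)"
    proof -
      have key: "\<And>a b c F N. (F::real) \<noteq> 0 \<Longrightarrow> N \<noteq> 0 \<Longrightarrow> a * c = 0 \<Longrightarrow> a / F * (b / N) - a / F * (c / N) = a * b / (N * F)"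
        by (simp add: field_simps)
      show ?thesis unfolding fact_Suc by (rule key) (use z in auto)
    qed
  qed
  finally show ?thesis .
qed


lemma const_eq: "sqrt (2 * real (Suc n) / pi) / sqrt (fact n) * (fact n / sqrt (fact (Suc n))) = 2 / sqrt (2 * pi)"
proof -
  have f: "sqrt (fact (Suc n)) = sqrt (real (Suc n)) * sqrt (fact n)"
    by (simp only: fact_Suc real_sqrt_mult of_nat_mult)
  have a: "sqrt (2 * real (Suc n) / pi) = sqrt 2 * sqrt (real (Suc n)) / sqrt pi"
    by (simp only: real_sqrt_mult real_sqrt_divide)
  have b: "sqrt (2 * pi) = sqrt 2 * sqrt pi" by (simp add: real_sqrt_mult)
  have ff: "sqrt (fact n) * sqrt (fact n) = (fact n :: real)"
    using fact_ge_zero real_sqrt_mult_self by (metis abs_of_nonneg real_sqrt_abs2 real_sqrt_mult)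
  have t: "sqrt 2 * sqrt 2 = (2::real)" by simp
  have p1: "sqrt (fact n) > (0::real)" "sqrt (real (Suc n)) > 0" "sqrt pi > 0" "sqrt 2 > (0::real)" by auto
  show ?thesis unfolding f a b using p1
    by (simp add: field_simps ff t del: fact_Suc)
qed

theorem lemmaA5:
  fixes d :: nat and x :: real
  assumes "odd d" and "d > 0" and "x \<ge> 0"
  shows "hermite_proj d sign_pm x =
    sqrt (2 * real d / pi) * hermite (d - 1) 0 * integral {0..x} (\<lambda>t. hermite d t / t)"
proof -
  obtain n where d: "d = Suc n" using assms(2) by (cases d) auto
  have ev: "even n" using assms(1) d by simp
  have "sqrt (2 * real d / pi) * hermite (d - 1) 0 * integral {0..x} (\<lambda>t. hermite d t / t)
      = sqrt (2 * real (Suc n) / pi) / sqrt (fact n) * integral {0..x} (\<lambda>t. He n 0 * (hermite (Suc n) t / t))"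
    unfolding d Henstock_Kurzweil_Integration.integral_mult_right by (simp add: hermite_def[of n])
  also have "\<dots> = 2 / sqrt (2 * pi) * (\<Sum>j\<le>n. He j 0 * He (Suc j) x / fact (Suc j))"
    unfolding integral_part[OF ev assms(3)] mult.assoc[symmetric] const_eq ..
  also have "\<dots> = hermite_proj d sign_pm x"
    unfolding d proj_formula sum_distrib_left ..
  finally show ?thesis ..
qed

end
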